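(* Let $a_{n,k}$ denote the number of matchings of size $n$ containing exactly $k$ occurrences of the endhered pattern $21$ (equivalently, the same numbers for the pattern $12$), with $a_{n,k}$ defined for all integers $k$. Then for $n\ge1$ and all integers $k$, $$a_{n+1,k}=a_{n,k-1}+2(n-k)\,a_{n,k}+2(k+1)\,a_{n,k+1},$$ with $a_{1,0}=1$ and $a_{1,k}=0$ for $k\ne 0$. In particular $a_{n,k}=0$ whenever $k<0$.
   Context: A matching of size $n$ is a set of $n$ arcs $(a,b)$ with $1\le a<b\le 2n$ such that each point of $\{1,\dots,2n\}$ belongs to exactly one arc. An occurrence of the endhered pattern $21$ in a matching $\mu$ is a pair of arcs of $\mu$ of the form $(i+1,j+2),(i+2,j+1)$ (two nested arcs whose starting points are consecutive and whose ending points are consecutive); an occurrence of $12$ is a pair of arcs of the form $(i+1,j+1),(i+2,j+2)$ (two crossing arcs with consecutive starting points and consecutive ending points). The number of occurrences is the number of such pairs. *)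

theory Defs
  imports Main
begin

definition is_matching :: "nat \<Rightarrow> (nat \<times> nat) set \<Rightarrow> bool" where
  "is_matching n M \<longleftrightarrow>
     M \<subseteq> {(a, b). 1 \<le> a \<and> a < b \<and> b \<le> 2 * n} \<and>
     (\<forall>p \<in> {1..2 * n}. \<exists>!e. e \<in> M \<and> (fst e = p \<or> snd e = p))"

definition occ21 :: "(nat \<times> nat) set \<Rightarrow> nat" where
  "occ21 M = card {(i, j). (i + 1, j + 2) \<in> M \<and> (i + 2, j + 1) \<in> M}"

definition occ12 :: "(nat \<times> nat) set \<Rightarrow> nat" where
  "occ12 M = card {(i, j). (i + 1, j + 1) \<in> M \<and> (i + 2, j + 2) \<in> M}"

definition a21 :: "nat \<Rightarrow> int \<Rightarrow> int" where
  "a21 n k = int (card {M. is_matching n M \<and> int (occ21 M) = k})"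

definition a12 :: "nat \<Rightarrow> int \<Rightarrow> int" where
  "a12 n k = int (card {M. is_matching n M \<and> int (occ12 M) = k})"

end

theory Submission
  imports Defs
begin


definition perf :: "nat set \<Rightarrow> (nat \<times> nat) set \<Rightarrow> bool" where
  "perf P M \<longleftrightarrow> (\<forall>(a,b)\<in>M. a < b \<and> a \<in> P \<and> b \<in> P) \<and>
     (\<forall>p\<in>P. \<exists>!e. e \<in> M \<and> (fst e = p \<or> snd e = p))"

lemma is_matching_perf: "is_matching n M \<longleftrightarrow> perf {1..2*n} M"
proof -
  have "M \<subseteq> {(a, b). 1 \<le> a \<and> a < b \<and> b \<le> 2 * n} \<longleftrightarrow> (\<forall>(a,b)\<in>M. a < b \<and> a \<in> {1..2*n} \<and> b \<in> {1..2*n})"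
    by fastforce
  then show ?thesis unfolding is_matching_def perf_def by simp
qed

lemma perf_arc: "perf P M \<Longrightarrow> (a,b) \<in> M \<Longrightarrow> a < b \<and> a \<in> P \<and> b \<in> P"
  unfolding perf_def by (drule conjunct1) (drule bspec, assumption, simp)

lemma perf_uniq:
  assumes "perf P M" "e \<in> M" "e' \<in> M" "fst e = p \<or> snd e = p" "fst e' = p \<or> snd e' = p"
  shows "e = e'"
proof -
  have "p \<in> P" using assms perf_arc[OF assms(1), of "fst e" "snd e"] by auto
  then have "\<exists>!e. e \<in> M \<and> (fst e = p \<or> snd e = p)" using assms(1) unfolding perf_def by blast
  then show "e = e'" using assms by auto
qed

lemma perf_same_start: "perf P M \<Longrightarrow> (a,b) \<in> M \<Longrightarrow> (a,b') \<in> M \<Longrightarrow> b = b'"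
  using perf_uniq[of P M "(a,b)" "(a,b')" a] by auto
lemma perf_same_end: "perf P M \<Longrightarrow> (a,b) \<in> M \<Longrightarrow> (a',b) \<in> M \<Longrightarrow> a = a'"
  using perf_uniq[of P M "(a,b)" "(a',b)" b] by auto
lemma perf_start_end: "perf P M \<Longrightarrow> (a,b) \<in> M \<Longrightarrow> (c,a) \<in> M \<Longrightarrow> False"
  using perf_uniq[of P M "(a,b)" "(c,a)" a] perf_arc[of P M a b] by auto

lemma perf_map:
  assumes "perf P M" "strict_mono_on P f"
  shows "perf (f ` P) (map_prod f f ` M)"
proof -
  have inj: "inj_on f P" using assms(2) strict_mono_on_imp_inj_on by blast
  have 1: "\<forall>(a,b)\<in>map_prod f f ` M. a < b \<and> a \<in> f ` P \<and> b \<in> f ` P"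
  proof (rule ballI, clarify)
    fix x y assume "(x,y) \<in> M"
    then have "x < y" "x \<in> P" "y \<in> P" using perf_arc[OF assms(1)] by auto
    then show "f x < f y \<and> f x \<in> f ` P \<and> f y \<in> f ` P"
      using assms(2) unfolding strict_mono_on_def monotone_on_def by blast
  qed
  have 2: "\<exists>!e. e \<in> map_prod f f ` M \<and> (fst e = q \<or> snd e = q)" if q: "q \<in> f ` P" for q
  proof -
    obtain p where p: "p \<in> P" "q = f p" using q by auto
    obtain e where e: "e \<in> M" "fst e = p \<or> snd e = p" using assms(1) p unfolding perf_def by blast
    show ?thesis
    proof (rule ex1I[of _ "map_prod f f e"])
      show "map_prod f f e \<in> map_prod f f ` M \<and> (fst (map_prod f f e) = q \<or> snd (map_prod f f e) = q)"
        using e p by (cases e) auto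
    next
      fix e' assume e': "e' \<in> map_prod f f ` M \<and> (fst e' = q \<or> snd e' = q)"
      then obtain d where d: "d \<in> M" "e' = map_prod f f d" by auto
      obtain x y where xy: "d = (x,y)" by (cases d)
      have xP: "x \<in> P" "y \<in> P" using perf_arc[OF assms(1)] d xy by auto
      have "f x = f p \<or> f y = f p" using e' d xy p by simp
      then have "x = p \<or> y = p" using xP p(1) inj unfolding inj_on_def by blast
      then have "fst d = p \<or> snd d = p" using xy by simp
      then have "e = d" using perf_uniq[OF assms(1) e(1) d(1)] e(2) by blast
      then show "e' = map_prod f f e" using d by simp
    qed
  qed
  show ?thesis unfolding perf_def by (rule conjI[OF 1]) (use 2 in blast)
qed

lemma perf_insert:
  assumes "perf P M" "x \<notin> P" "y \<notin> P" "x < y"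
  shows "perf (insert x (insert y P)) (insert (x,y) M)"
proof -
  have arcs: "e \<in> M \<Longrightarrow> fst e \<in> P \<and> snd e \<in> P" for e using perf_arc[OF assms(1), of "fst e" "snd e"] by auto
  have 1: "\<forall>(a,b)\<in>insert (x,y) M. a < b \<and> a \<in> insert x (insert y P) \<and> b \<in> insert x (insert y P)"
  proof (rule ballI, clarify)
    fix a b assume "(a,b) \<in> insert (x,y) M"
    then show "a < b \<and> a \<in> insert x (insert y P) \<and> b \<in> insert x (insert y P)"
      using perf_arc[OF assms(1), of a b] assms(4) by auto
  qed
  have 2: "\<exists>!e. e \<in> insert (x,y) M \<and> (fst e = q \<or> snd e = q)" if q: "q \<in> insert x (insert y P)" for q
  proof (cases "q \<in> P")
    case True
    then obtain e where e: "e \<in> M" "fst e = q \<or> snd e = q" using assms(1) unfolding perf_def by blast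
    show ?thesis
    proof (rule ex1I[of _ e])
      show "e \<in> insert (x, y) M \<and> (fst e = q \<or> snd e = q)" using e by auto
    next
      fix e' assume e': "e' \<in> insert (x, y) M \<and> (fst e' = q \<or> snd e' = q)"
      then have "e' \<noteq> (x,y)" using True assms(2,3) by auto
      then have "e' \<in> M" using e' by auto
      then show "e' = e" using perf_uniq[OF assms(1) e(1)] e(2) e' by metis
    qed
  next
    case False
    then have qq: "q = x \<or> q = y" using q by auto
    show ?thesis
    proof (rule ex1I[of _ "(x,y)"])
      show "(x, y) \<in> insert (x, y) M \<and> (fst (x, y) = q \<or> snd (x, y) = q)" using qq by auto
    next
      fix e' assume e': "e' \<in> insert (x, y) M \<and> (fst e' = q \<or> snd e' = q)"
      show "e' = (x,y)"
      proof (rule ccontr)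
        assume "e' \<noteq> (x,y)"
        then have "e' \<in> M" using e' by auto
        then have "fst e' \<in> P" "snd e' \<in> P" using arcs by auto
        then show False using e' qq assms(2,3) by auto
      qed
    qed
  qed
  show ?thesis unfolding perf_def by (rule conjI[OF 1]) (use 2 in blast)
qed

lemma perf_remove:
  assumes "perf P M" "(x,y) \<in> M"
  shows "perf (P - {x,y}) (M - {(x,y)})"
proof -
  have 0: "a < b \<and> a \<in> P - {x,y} \<and> b \<in> P - {x,y}" if ab: "(a,b) \<in> M" "(a,b) \<noteq> (x,y)" for a b
  proof -
    have u: "\<And>p. fst (a,b) = p \<or> snd (a,b) = p \<Longrightarrow> fst (x,y) = p \<or> snd (x,y) = p \<Longrightarrow> False"
      using perf_uniq[OF assms(1) ab(1) assms(2)] ab(2) by blast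
    have "a \<noteq> x" "a \<noteq> y" "b \<noteq> x" "b \<noteq> y" using u by auto
    then show ?thesis using perf_arc[OF assms(1) ab(1)] by auto
  qed
  have 1: "\<forall>(a,b)\<in>M - {(x,y)}. a < b \<and> a \<in> P - {x,y} \<and> b \<in> P - {x,y}"
    using 0 by blast
  have 2: "\<exists>!e. e \<in> M - {(x,y)} \<and> (fst e = q \<or> snd e = q)" if q: "q \<in> P - {x,y}" for q
  proof -
    obtain e where e: "e \<in> M" "fst e = q \<or> snd e = q" using assms(1) q unfolding perf_def by blast
    have "e \<noteq> (x,y)" using e q by auto
    show ?thesis
    proof (rule ex1I[of _ e])
      show "e \<in> M - {(x, y)} \<and> (fst e = q \<or> snd e = q)" using e \<open>e \<noteq> (x,y)\<close> by auto
    next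
      fix e' assume e': "e' \<in> M - {(x, y)} \<and> (fst e' = q \<or> snd e' = q)"
      then show "e' = e" using perf_uniq[OF assms(1) e(1)] e(2) by blast
    qed
  qed
  show ?thesis unfolding perf_def by (rule conjI[OF 1]) (use 2 in blast)
qed



definition sh :: "nat \<Rightarrow> nat \<Rightarrow> nat" where
  "sh g x = (if x \<le> g then x + 1 else x + 2)"

definition ins :: "nat \<Rightarrow> (nat \<times> nat) set \<Rightarrow> (nat \<times> nat) set" where
  "ins g M = insert (1, g + 2) (map_prod (sh g) (sh g) ` M)"

lemma sh_less_iff[simp]: "sh g x < sh g y \<longleftrightarrow> x < y"
  unfolding sh_def by auto
lemma sh_eq_iff[simp]: "sh g x = sh g y \<longleftrightarrow> x = y"
  unfolding sh_def by auto
lemma sh_succ: "sh g y = sh g x + 1 \<longleftrightarrow> (y = x + 1 \<and> x \<noteq> g)"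
  unfolding sh_def by auto
lemma sh_ge: "sh g x \<ge> x + 1"
  unfolding sh_def by auto
lemma sh_ne: "sh g x \<noteq> g + 2"
  unfolding sh_def by auto

lemma sh_strict_mono: "strict_mono_on P (sh g)"
  unfolding strict_mono_on_def monotone_on_def by simp

lemma sh_image: assumes "g \<le> 2*n" shows "sh g ` {1..2*n} = {2..2*n+2} - {g+2}"
proof
  show "sh g ` {1..2*n} \<subseteq> {2..2*n+2} - {g+2}" unfolding sh_def by auto
next
  show "{2..2*n+2} - {g+2} \<subseteq> sh g ` {1..2*n}"
  proof
    fix y assume y: "y \<in> {2..2*n+2} - {g+2}"
    define x where "x = (if y \<le> g + 1 then y - 1 else y - 2)"
    have "x \<in> {1..2*n}" using y assms unfolding x_def by auto
    moreover have "y = sh g x" using y unfolding x_def sh_def by auto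
    ultimately show "y \<in> sh g ` {1..2*n}" by blast
  qed
qed

lemma ins_matching:
  assumes "is_matching n M" "g \<le> 2*n"
  shows "is_matching (n+1) (ins g M)"
proof -
  have p: "perf {1..2*n} M" using assms(1) is_matching_perf by blast
  have "perf (sh g ` {1..2*n}) (map_prod (sh g) (sh g) ` M)"
    by (rule perf_map[OF p sh_strict_mono])
  then have p2: "perf ({2..2*n+2} - {g+2}) (map_prod (sh g) (sh g) ` M)" using sh_image[OF assms(2)] by simp
  have p3: "perf (insert 1 (insert (g+2) ({2..2*n+2} - {g+2}))) (ins g M)"
    unfolding ins_def by (rule perf_insert[OF p2]) auto
  have "insert 1 (insert (g+2) ({2..2*n+2} - {g+2})) = {1..2*(n+1)}" using assms(2) by auto
  then show ?thesis using p3 is_matching_perf by simp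
qed

lemma matching_pts: "is_matching n M \<Longrightarrow> (a,b) \<in> M \<Longrightarrow> 1 \<le> a \<and> a < b \<and> b \<le> 2*n"
  unfolding is_matching_def by blast

lemma ins_inj:
  assumes "is_matching n M" "is_matching n' M'" "ins g M = ins g' M'"
  shows "M = M' \<and> g = g'"
proof -
  have "(1, g+2) \<in> ins g M" unfolding ins_def by simp
  then have "(1, g+2) \<in> ins g' M'" using assms(3) by simp
  moreover have "(1, g+2) \<notin> map_prod (sh g') (sh g') ` M'"
  proof
    assume "(1, g+2) \<in> map_prod (sh g') (sh g') ` M'"
    then obtain a b where "(a,b) \<in> M'" "sh g' a = 1" by auto
    then show False using matching_pts[OF assms(2)] sh_ge[of a g'] by fastforce
  qed
  ultimately have "(1, g+2) = (1, g'+2)" unfolding ins_def by blast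
  then have gg: "g = g'" by simp
  have n1: "(1, g+2) \<notin> map_prod (sh g) (sh g) ` M"
  proof
    assume "(1, g+2) \<in> map_prod (sh g) (sh g) ` M"
    then obtain a b where "(a,b) \<in> M" "sh g a = 1" by auto
    then show False using matching_pts[OF assms(1)] sh_ge[of a g] by fastforce
  qed
  have n2: "(1, g+2) \<notin> map_prod (sh g) (sh g) ` M'"
  proof
    assume "(1, g+2) \<in> map_prod (sh g) (sh g) ` M'"
    then obtain a b where "(a,b) \<in> M'" "sh g a = 1" by auto
    then show False using matching_pts[OF assms(2)] sh_ge[of a g] by fastforce
  qed
  have "map_prod (sh g) (sh g) ` M = map_prod (sh g) (sh g) ` M'"
    using assms(3) n1 n2 gg unfolding ins_def by (metis insert_ident)
  moreover have "inj (map_prod (sh g) (sh g))" by (rule prod.inj_map) (auto simp: inj_on_def)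
  ultimately have "M = M'" by (simp add: inj_image_eq_iff)
  then show ?thesis using gg by simp
qed

lemma ins_surj:
  assumes "is_matching (n+1) N"
  shows "\<exists>M g. is_matching n M \<and> g \<le> 2*n \<and> N = ins g M"
proof -
  have p: "perf {1..2*n+2} N" using assms is_matching_perf by simp
  have "\<exists>!e. e \<in> N \<and> (fst e = 1 \<or> snd e = 1)" using p unfolding perf_def by simp
  then obtain e where e: "e \<in> N" "fst e = 1 \<or> snd e = 1" by blast
  obtain c where ec: "e = (1, c)"
  proof (cases e)
    case (Pair a b)
    then have "a < b" "1 \<le> a" using matching_pts[OF assms] e by auto
    then show ?thesis using that e Pair by auto
  qed
  have c: "2 \<le> c" "c \<le> 2*n+2" using matching_pts[OF assms, of 1 c] e ec by auto
  define u where "u x = (if x < c then x - 1 else x - 2)" for x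
  define Q where "Q = {1..2*n+2} - {1,c}"
  have pr: "perf Q (N - {(1,c)})" unfolding Q_def using perf_remove[OF p] e ec by simp
  have um: "strict_mono_on Q (u)" unfolding strict_mono_on_def monotone_on_def Q_def u_def by auto
  have ui: "u ` Q = {1..2*n}"
  proof
    show "u ` Q \<subseteq> {1..2*n}" unfolding Q_def u_def using c by auto
  next
    show "{1..2*n} \<subseteq> u ` Q"
    proof
      fix y assume y: "y \<in> {1..2*n}"
      define x where "x = (if y + 1 < c then y + 1 else y + 2)"
      have "x \<in> Q" "y = u x" using y c unfolding x_def Q_def u_def by auto
      then show "y \<in> u ` Q" by blast
    qed
  qed
  define M where "M = map_prod u u ` (N - {(1,c)})"
  have pm: "perf {1..2*n} M" using perf_map[OF pr um] ui unfolding M_def by simp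
  define g where "g = c - 2"
  have su: "sh g (u x) = x" if "x \<in> Q" for x using that c unfolding sh_def u_def g_def Q_def by auto
  have "map_prod (sh g) (sh g) ` M = map_prod (sh g \<circ> u) (sh g \<circ> u) ` (N - {(1,c)})"
    unfolding M_def image_comp by (simp add: map_prod.comp)
  also have "\<dots> = id ` (N - {(1,c)})"
  proof (rule image_cong[OF refl])
    fix d assume d: "d \<in> N - {(1,c)}"
    obtain x y where xy: "d = (x,y)" by (cases d)
    have "x \<in> Q" "y \<in> Q" using perf_arc[OF pr] d xy by auto
    then show "map_prod (sh g \<circ> u) (sh g \<circ> u) d = id d" using su xy by simp
  qed
  finally have calc: "map_prod (sh g) (sh g) ` M = N - {(1,c)}" by simp
  have gc: "g + 2 = c" using c g_def by simp
  have "ins g M = insert (1, c) (N - {(1,c)})" using calc unfolding ins_def gc by simp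
  then have "ins g M = N" using e(1) ec insert_Diff by metis
  moreover have "g \<le> 2*n" using c g_def by simp
  ultimately show ?thesis using pm is_matching_perf by blast
qed



definition Occ :: "nat \<Rightarrow> (nat \<times> nat) set \<Rightarrow> (nat \<times> nat) set" where
  "Occ p M = {(i,j). (i+1, j+1+p) \<in> M \<and> (i+2, j+2-p) \<in> M}"

definition B :: "nat \<Rightarrow> (nat \<times> nat) set \<Rightarrow> nat \<Rightarrow> (nat \<times> nat) set" where
  "B p M g = {(i,j) \<in> Occ p M. i+1 = g \<or> j+1 = g}"

definition tau :: "nat \<Rightarrow> nat \<times> nat \<Rightarrow> nat \<times> nat" where
  "tau g ij = (sh g (fst ij + 1) - 1, sh g (snd ij + 1) - 1)"

lemma occ21_O: "occ21 M = card (Occ 1 M)"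
  unfolding occ21_def Occ_def by simp
lemma occ12_O: "occ12 M = card (Occ 0 M)"
  unfolding occ12_def Occ_def by simp

lemma mem_ins: "(u,v) \<in> ins g M \<longleftrightarrow> (u,v) = (1,g+2) \<or> (\<exists>a b. (a,b) \<in> M \<and> u = sh g a \<and> v = sh g b)"
  unfolding ins_def by auto

lemma sh_1: "1 \<le> a \<Longrightarrow> sh g a \<noteq> 1"
  using sh_ge[of a g] by simp
lemma sh_2: "1 \<le> a \<Longrightarrow> sh g a = 2 \<longleftrightarrow> a = 1 \<and> 1 \<le> g"
  unfolding sh_def by auto

lemma Occ_ins:
  assumes M: "is_matching n M" and p: "p \<le> 1"
  shows "Occ p (ins g M) = (if (1, g+1-p) \<in> M then {(0, g+1-p)} else {}) \<union> tau g ` (Occ p M - B p M g)"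
proof (rule set_eqI, rule iffI)
  fix x assume x: "x \<in> Occ p (ins g M)"
  obtain i j where ij: "x = (i,j)" by (cases x)
  have h1: "(i+1, j+1+p) \<in> ins g M" and h2: "(i+2, j+2-p) \<in> ins g M" using x ij unfolding Occ_def by auto
  show "x \<in> (if (1, g+1-p) \<in> M then {(0, g+1-p)} else {}) \<union> tau g ` (Occ p M - B p M g)"
  proof (cases "i = 0")
    case True
    have "j+1+p = g+2"
    proof -
      have "(1, j+1+p) \<in> ins g M" using h1 True by simp
      then have "(1, j+1+p) = (1,g+2) \<or> (\<exists>a b. (a,b) \<in> M \<and> 1 = sh g a \<and> j+1+p = sh g b)"
        using mem_ins[of 1 "j+1+p" g M] by blast
      then show ?thesis using matching_pts[OF M] sh_1 by fastforce
    qed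
    then have jj: "j = g+1-p" by simp
    have "(2, j+2-p) \<in> ins g M" using h2 True by (metis add_0)
    then obtain a b where ab: "(a,b) \<in> M" "2 = sh g a" "j+2-p = sh g b" unfolding mem_ins by auto
    have a1: "a = 1" using sh_2[of a g] ab matching_pts[OF M ab(1)] by auto
    have "b = g+1-p" using ab(3) jj p unfolding sh_def by (auto split: if_splits)
    then have "(1, g+1-p) \<in> M" using ab(1) a1 by simp
    then show ?thesis using ij True jj by simp
  next
    case False
    obtain a b where ab: "(a,b) \<in> M" "i+1 = sh g a" "j+1+p = sh g b"
      using h1 False unfolding mem_ins by auto
    obtain a' b' where ab': "(a',b') \<in> M" "i+2 = sh g a'" "j+2-p = sh g b'"
      using h2 False unfolding mem_ins by auto
    have aa: "a' = a+1" "a \<noteq> g" using sh_succ[of g a' a] ab(2) ab'(2) by auto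
    have a1: "1 \<le> a" "1 \<le> b" "1 \<le> b'" using matching_pts[OF M ab(1)] matching_pts[OF M ab'(1)] by auto
    consider "p = 0" | "p = 1" using p by arith
    then show ?thesis
    proof cases
      case 1
      have bb: "b' = b+1" "b \<noteq> g" using sh_succ[of g b' b] ab(3) ab'(3) 1 by auto
      have "(a-1, b-1) \<in> Occ p M" unfolding Occ_def using ab(1) ab'(1) aa bb a1 1 by auto
      moreover have "(a-1, b-1) \<notin> B p M g" unfolding B_def using aa bb a1 by auto
      moreover have "tau g (a-1, b-1) = (i,j)" unfolding tau_def using ab a1 1 by auto
      ultimately show ?thesis using ij by (metis Diff_iff UnI2 image_eqI)
    next
      case 2
      have bb: "b = b'+1" "b' \<noteq> g" using sh_succ[of g b b'] ab(3) ab'(3) 2 by auto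
      have "(a-1, b'-1) \<in> Occ p M" unfolding Occ_def using ab(1) ab'(1) aa bb a1 2 by auto
      moreover have "(a-1, b'-1) \<notin> B p M g" unfolding B_def using aa bb a1 by auto
      moreover have "tau g (a-1, b'-1) = (i,j)" unfolding tau_def using ab ab' a1 2 by auto
      ultimately show ?thesis using ij by (metis Diff_iff UnI2 image_eqI)
    qed
  qed
next
  fix x assume x: "x \<in> (if (1, g+1-p) \<in> M then {(0, g+1-p)} else {}) \<union> tau g ` (Occ p M - B p M g)"
  show "x \<in> Occ p (ins g M)"
  proof (cases "x \<in> tau g ` (Occ p M - B p M g)")
    case False
    then have D: "(1, g+1-p) \<in> M" and xx: "x = (0, g+1-p)" using x by (auto split: if_splits)
    have g1: "1 + p \<le> g" using matching_pts[OF M D] p by auto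
    have "(1, g+1-p+1+p) \<in> ins g M" unfolding ins_def using p by auto
    moreover have "(2, g+1-p+2-p) \<in> ins g M"
    proof -
      have "2 = sh g 1" "g+1-p+2-p = sh g (g+1-p)" using g1 p unfolding sh_def by auto
      then show ?thesis unfolding mem_ins using D by blast
    qed
    ultimately show ?thesis unfolding Occ_def xx by (simp add: numeral_2_eq_2)
  next
    case True
    then obtain i j where ij: "(i,j) \<in> Occ p M" "(i,j) \<notin> B p M g" "x = tau g (i,j)" by auto
    have h1: "(i+1, j+1+p) \<in> M" and h2: "(i+2, j+2-p) \<in> M" using ij(1) unfolding Occ_def by auto
    have ng: "i+1 \<noteq> g" "j+1 \<noteq> g" using ij(1,2) unfolding B_def by auto
    have s1: "sh g (i+2) = sh g (i+1) + 1" "sh g (j+2) = sh g (j+1) + 1"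
      using sh_succ[of g "i+2" "i+1"] sh_succ[of g "j+2" "j+1"] ng by auto
    have ge: "sh g (i+1) \<ge> 1" "sh g (j+1) \<ge> 1" using sh_ge[of "i+1" g] sh_ge[of "j+1" g] by auto
    have m1: "(sh g (i+1), sh g (j+1+p)) \<in> ins g M" "(sh g (i+2), sh g (j+2-p)) \<in> ins g M"
      using h1 h2 unfolding mem_ins by blast+
    consider "p = 0" | "p = 1" using p by arith
    then show ?thesis
    proof cases
      case 1
      then show ?thesis using m1 s1 ge unfolding Occ_def ij(3) tau_def by auto
    next
      case 2
      then show ?thesis using m1 s1 ge unfolding Occ_def ij(3) tau_def by auto
    qed
  qed
qed


lemma finite_Occ: assumes M: "is_matching n M" shows "finite (Occ p M)"
proof (rule finite_subset[of _ "{0..2*n} \<times> {0..2*n}"])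
  show "Occ p M \<subseteq> {0..2*n} \<times> {0..2*n}"
  proof
    fix x assume x: "x \<in> Occ p M"
    obtain i j where ij: "x = (i,j)" by (cases x)
    have "(i+1, j+1+p) \<in> M" using x ij unfolding Occ_def by auto
    then show "x \<in> {0..2*n} \<times> {0..2*n}" using matching_pts[OF M] ij by fastforce
  qed
qed simp

lemma card_Occ_ins:
  assumes M: "is_matching n M" and p: "p \<le> 1"
  shows "card (Occ p (ins g M)) = (if (1, g+1-p) \<in> M then 1 else 0) + (card (Occ p M) - card (B p M g))"
proof -
  have fin: "finite (Occ p M)" by (rule finite_Occ[OF M])
  have BO: "B p M g \<subseteq> Occ p M" unfolding B_def by auto
  have inj: "inj_on (tau g) (Occ p M - B p M g)"
  proof (rule inj_onI)
    fix x y assume "x \<in> Occ p M - B p M g" "y \<in> Occ p M - B p M g" "tau g x = tau g y"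
    then have "sh g (fst x + 1) - 1 = sh g (fst y + 1) - 1" "sh g (snd x + 1) - 1 = sh g (snd y + 1) - 1"
      unfolding tau_def by auto
    then have "sh g (fst x + 1) = sh g (fst y + 1)" "sh g (snd x + 1) = sh g (snd y + 1)"
      using sh_ge[of "fst x + 1" g] sh_ge[of "fst y + 1" g] sh_ge[of "snd x + 1" g] sh_ge[of "snd y + 1" g]
      by linarith+
    then show "x = y" by (simp add: prod_eq_iff)
  qed
  have disj: "(if (1, g+1-p) \<in> M then {(0, g+1-p)} else {}) \<inter> tau g ` (Occ p M - B p M g) = {}"
  proof -
    have "fst (tau g x) \<noteq> 0" for x unfolding tau_def using sh_ge[of "fst x + 1" g] by simp
    then have "(0, y) \<notin> tau g ` A" for y A by (metis fst_conv imageE)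
    then show ?thesis by (auto split: if_splits)
  qed
  have "card (Occ p (ins g M)) = card (if (1, g+1-p) \<in> M then {(0, g+1-p)} else {}) + card (tau g ` (Occ p M - B p M g))"
  proof -
    have f1: "finite (if (1, g+1-p) \<in> M then {(0, g+1-p)} else {})" by simp
    have f2: "finite (tau g ` (Occ p M - B p M g))" using fin by simp
    show ?thesis using card_Un_disjoint[OF f1 f2 disj] Occ_ins[OF M p] by simp
  qed
  also have "card (tau g ` (Occ p M - B p M g)) = card (Occ p M - B p M g)"
    by (rule card_image[OF inj])
  also have "\<dots> = card (Occ p M) - card (B p M g)"
    by (rule card_Diff_subset) (use fin BO finite_subset in auto)
  finally show ?thesis by (cases "(1, g+1-p) \<in> M") simp_all
qed

lemma Occ_arcs:
  assumes M: "is_matching n M" and p: "p \<le> 1" and x: "(i,j) \<in> Occ p M"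
  shows "(i+1, j+1+p) \<in> M" "(i+2, j+2-p) \<in> M"
  using x unfolding Occ_def by auto

lemma B_le1:
  assumes M: "is_matching n M" and p: "p \<le> 1"
  shows "card (B p M g) \<le> 1"
proof -
  have P: "perf {1..2*n} M" using M is_matching_perf by blast
  have fin: "finite (B p M g)" by (rule finite_subset[OF _ finite_Occ[OF M, of p]]) (auto simp: B_def)
  have "x = y" if x: "x \<in> B p M g" and y: "y \<in> B p M g" for x y
  proof -
    obtain i j where ij: "x = (i,j)" by (cases x)
    obtain i' j' where ij': "y = (i',j')" by (cases y)
    have xo: "(i,j) \<in> Occ p M" "i+1 = g \<or> j+1 = g" using x ij unfolding B_def by auto
    have yo: "(i',j') \<in> Occ p M" "i'+1 = g \<or> j'+1 = g" using y ij' unfolding B_def by auto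
    note a = Occ_arcs[OF M p xo(1)] and b = Occ_arcs[OF M p yo(1)]
    consider "p = 0" | "p = 1" using p by arith
    then show ?thesis
    proof cases
      case 1
      have A: "(i+1, j+1) \<in> M" "(i+2, j+2) \<in> M" "(i'+1, j'+1) \<in> M" "(i'+2, j'+2) \<in> M" using a b 1 by auto
      have "i = i' \<and> j = j'"
      proof -
        { assume "i+1 = g" "i'+1 = g" then have ?thesis using perf_same_start[OF P A(1)] A(3) by auto }
        moreover { assume "j+1 = g" "j'+1 = g" then have ?thesis using perf_same_end[OF P A(1)] A(3) by auto }
        moreover { assume "i+1 = g" "j'+1 = g" then have ?thesis using perf_start_end[OF P A(1)] A(3) by auto }
        moreover { assume "j+1 = g" "i'+1 = g" then have ?thesis using perf_start_end[OF P A(3)] A(1) by auto }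
        ultimately show ?thesis using xo(2) yo(2) by blast
      qed
      then show ?thesis using ij ij' by simp
    next
      case 2
      have A: "(i+1, j+2) \<in> M" "(i+2, j+1) \<in> M" "(i'+1, j'+2) \<in> M" "(i'+2, j'+1) \<in> M" using a b 2 by auto
      have "i = i' \<and> j = j'"
      proof -
        { assume "i+1 = g" "i'+1 = g" then have ?thesis using perf_same_start[OF P A(1)] A(3) by auto }
        moreover { assume "j+1 = g" "j'+1 = g" then have ?thesis using perf_same_end[OF P A(2)] A(4) by auto }
        moreover { assume "i+1 = g" "j'+1 = g" then have ?thesis using perf_start_end[OF P A(1)] A(4) by auto }
        moreover { assume "j+1 = g" "i'+1 = g" then have ?thesis using perf_start_end[OF P A(3)] A(2) by auto }
        ultimately show ?thesis using xo(2) yo(2) by blast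
      qed
      then show ?thesis using ij ij' by simp
    qed
  qed
  then show ?thesis using card_le_Suc0_iff_eq[OF fin] by auto
qed

lemma B_D:
  assumes M: "is_matching n M" and p: "p \<le> 1" and D: "(1, g+1-p) \<in> M"
  shows "B p M g = {}"
proof -
  have P: "perf {1..2*n} M" using M is_matching_perf by blast
  have False if x: "(i,j) \<in> B p M g" for i j
  proof -
    have xo: "(i,j) \<in> Occ p M" "i+1 = g \<or> j+1 = g" using x unfolding B_def by auto
    note a = Occ_arcs[OF M p xo(1)]
    consider "p = 0" | "p = 1" using p by arith
    then show False
    proof cases
      case 1
      have A: "(i+1, j+1) \<in> M" "(i+2, j+2) \<in> M" "(1, g+1) \<in> M" using a D 1 by auto
      show False
      proof (cases "i+1 = g")
        case True then show False using perf_start_end[OF P A(2)] A(3) by auto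
      next
        case False then have "j+1 = g" using xo by auto
        then show False using perf_same_end[OF P A(2)] A(3) by auto
      qed
    next
      case 2
      have A: "(i+1, j+2) \<in> M" "(i+2, j+1) \<in> M" "(1, g) \<in> M" using a D 2 by auto
      show False
      proof (cases "i+1 = g")
        case True then show False using perf_start_end[OF P A(1)] A(3) by auto
      next
        case False then have "j+1 = g" using xo by auto
        then show False using perf_same_end[OF P A(2)] A(3) by auto
      qed
    qed
  qed
  then show ?thesis by auto
qed

lemma card_filter_sum: "finite A \<Longrightarrow> card {x \<in> A. P x} = (\<Sum>x\<in>A. if P x then 1 else (0::nat))"
  unfolding card_eq_sum by (rule sum.inter_filter)

lemma sum_B:
  assumes M: "is_matching n M" and p: "p \<le> 1"
  shows "(\<Sum>g\<in>{0..2*n}. card (B p M g)) = 2 * card (Occ p M)"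
proof -
  have fin: "finite (Occ p M)" by (rule finite_Occ[OF M])
  have "(\<Sum>g\<in>{0..2*n}. card (B p M g)) =
        (\<Sum>g\<in>{0..2*n}. \<Sum>x\<in>Occ p M. if fst x + 1 = g \<or> snd x + 1 = g then 1 else 0)"
  proof (rule sum.cong[OF refl])
    fix g
    have "B p M g = {x \<in> Occ p M. fst x + 1 = g \<or> snd x + 1 = g}" unfolding B_def by auto
    then show "card (B p M g) = (\<Sum>x\<in>Occ p M. if fst x + 1 = g \<or> snd x + 1 = g then 1 else 0)"
      using card_filter_sum[OF fin] by simp
  qed
  also have "\<dots> = (\<Sum>x\<in>Occ p M. \<Sum>g\<in>{0..2*n}. if fst x + 1 = g \<or> snd x + 1 = g then 1 else 0)"
    by (rule sum.swap)
  also have "\<dots> = (\<Sum>x\<in>Occ p M. 2)"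
  proof (rule sum.cong[OF refl])
    fix x assume x: "x \<in> Occ p M"
    obtain i j where ij: "x = (i,j)" by (cases x)
    note a = Occ_arcs[OF M p x[unfolded ij]]
    have r1: "1 \<le> i+1 \<and> i+1 < j+1+p \<and> j+1+p \<le> 2*n" by (rule matching_pts[OF M a(1)])
    have r2: "1 \<le> i+2 \<and> i+2 < j+2-p \<and> j+2-p \<le> 2*n" by (rule matching_pts[OF M a(2)])
    have r: "i + 1 \<le> 2*n" "j + 1 \<le> 2*n" "i \<noteq> j" using r1 r2 p by linarith+
    have "(\<Sum>g\<in>{0..2*n}. if fst x + 1 = g \<or> snd x + 1 = g then 1 else (0::nat)) = card {g \<in> {0..2*n}. fst x + 1 = g \<or> snd x + 1 = g}"
      by (rule card_filter_sum[symmetric]) simp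
    also have "{g \<in> {0..2*n}. fst x + 1 = g \<or> snd x + 1 = g} = {i+1, j+1}" using r ij by auto
    also have "card {i+1, j+1} = 2" using r by simp
    finally show "(\<Sum>g\<in>{0..2*n}. if fst x + 1 = g \<or> snd x + 1 = g then 1 else (0::nat)) = 2" .
  qed
  also have "\<dots> = 2 * card (Occ p M)" by simp
  finally show ?thesis .
qed

lemma card_D:
  assumes M: "is_matching n M" and p: "p \<le> 1"
  shows "card {g \<in> {0..2*n}. (1, g+1-p) \<in> M} = (if 1 \<le> n then 1 else 0)"
proof (cases "1 \<le> n")
  case False
  then have "n = 0" by simp
  then have "M = {}" using matching_pts[OF M] by fastforce
  then show ?thesis using False by simp
next
  case True
  have P: "perf {1..2*n} M" using M is_matching_perf by blast
  have "\<exists>!e. e \<in> M \<and> (fst e = 1 \<or> snd e = 1)" using P True unfolding perf_def by simp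
  then obtain e where e: "e \<in> M" "fst e = 1 \<or> snd e = 1" by blast
  obtain c where ec: "e = (1, c)"
  proof (cases e)
    case (Pair a b)
    then have "a < b" "1 \<le> a" using matching_pts[OF M] e by auto
    then show ?thesis using that e Pair by auto
  qed
  have c: "2 \<le> c" "c \<le> 2*n" using matching_pts[OF M, of 1 c] e ec by auto
  have "{g \<in> {0..2*n}. (1, g+1-p) \<in> M} = {c + p - 1}"
  proof (rule set_eqI, rule iffI)
    fix g assume g: "g \<in> {g \<in> {0..2*n}. (1, g+1-p) \<in> M}"
    then have "g+1-p = c" using perf_same_start[OF P] e ec by auto
    moreover have "g+1-p \<ge> 2" using g matching_pts[OF M, of 1 "g+1-p"] by auto
    ultimately show "g \<in> {c + p - 1}" using p by auto
  next
    fix g assume "g \<in> {c + p - 1}"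
    then have "g = c + p - 1" by simp
    then show "g \<in> {g \<in> {0..2*n}. (1, g+1-p) \<in> M}" using c p e ec by auto
  qed
  then show ?thesis using True by simp
qed


lemma int_card_filter: "finite A \<Longrightarrow> int (card {x \<in> A. P x}) = (\<Sum>x\<in>A. if P x then 1 else 0)"
proof -
  assume f: "finite A"
  have "int (card {x \<in> A. P x}) = int (\<Sum>x\<in>A. if P x then 1 else (0::nat))" using card_filter_sum[OF f] by simp
  also have "\<dots> = (\<Sum>x\<in>A. int (if P x then 1 else (0::nat)))" by (rule of_nat_sum)
  also have "\<dots> = (\<Sum>x\<in>A. if P x then 1 else 0)" by (rule sum.cong) auto
  finally show ?thesis .
qed

lemma count_M:
  assumes M: "is_matching n M" and p: "p \<le> 1"
  shows "int (card {g \<in> {0..2*n}. int (card (Occ p (ins g M))) = k}) =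
    (if k = int (card (Occ p M)) + 1 then (if 1 \<le> n then 1 else 0) else 0)
  + (if k = int (card (Occ p M)) then 2 * int n + 1 - (if 1 \<le> n then 1 else 0) - 2 * int (card (Occ p M)) else 0)
  + (if k = int (card (Occ p M)) - 1 then 2 * int (card (Occ p M)) else 0)"
proof -
  define G where "G = {0..2*n}"
  define m where "m = int (card (Occ p M))"
  define X where "X g = (if (1, g+1-p) \<in> M then 1 else (0::int))" for g
  define Z where "Z g = int (card (B p M g))" for g
  define dn where "dn = (if 1 \<le> n then 1 else (0::int))"
  have fin: "finite (Occ p M)" by (rule finite_Occ[OF M])
  have V: "int (card (Occ p (ins g M))) = m + X g - Z g" for g
  proof -
    have "card (B p M g) \<le> card (Occ p M)" by (rule card_mono[OF fin]) (auto simp: B_def)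
    then show ?thesis unfolding card_Occ_ins[OF M p] m_def X_def Z_def by auto
  qed
  have pt: "(if int (card (Occ p (ins g M))) = k then 1 else (0::int)) =
     X g * (if k = m + 1 then 1 else 0) + (1 - X g - Z g) * (if k = m then 1 else 0) + Z g * (if k = m - 1 then 1 else 0)" for g
  proof -
    have c1: "Z g = 0 \<or> Z g = 1" using B_le1[OF M p, of g] unfolding Z_def by auto
    have c2: "X g = 1 \<Longrightarrow> Z g = 0" using B_D[OF M p, of g] unfolding X_def Z_def by (auto split: if_splits)
    have c3: "X g = 0 \<or> X g = 1" unfolding X_def by auto
    show ?thesis unfolding V using c1 c2 c3 by auto
  qed
  have "int (card {g \<in> G. int (card (Occ p (ins g M))) = k}) = (\<Sum>g\<in>G. if int (card (Occ p (ins g M))) = k then 1 else (0::int))"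
    by (rule int_card_filter) (simp add: G_def)
  also have "\<dots> = (\<Sum>g\<in>G. X g * (if k = m + 1 then 1 else 0) + (1 - X g - Z g) * (if k = m then 1 else 0) + Z g * (if k = m - 1 then 1 else 0))"
    using pt by simp
  also have "\<dots> = (\<Sum>g\<in>G. X g) * (if k = m + 1 then 1 else 0) + (\<Sum>g\<in>G. 1 - X g - Z g) * (if k = m then 1 else 0) + (\<Sum>g\<in>G. Z g) * (if k = m - 1 then 1 else 0)"
    by (simp add: sum.distrib sum_distrib_right)
  also have "(\<Sum>g\<in>G. 1 - X g - Z g) = int (card G) - (\<Sum>g\<in>G. X g) - (\<Sum>g\<in>G. Z g)"
    by (simp add: sum_subtractf)
  also have "(\<Sum>g\<in>G. X g) = dn"
  proof -
    have "(\<Sum>g\<in>G. X g) = int (card {g \<in> G. (1, g+1-p) \<in> M})"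
      unfolding X_def by (rule int_card_filter[symmetric]) (simp add: G_def)
    then show ?thesis using card_D[OF M p] unfolding G_def dn_def by simp
  qed
  also have "(\<Sum>g\<in>G. Z g) = 2 * m"
    unfolding Z_def m_def G_def using sum_B[OF M p] by (simp flip: of_nat_sum)
  also have "card G = 2 * n + 1" unfolding G_def by simp
  finally show ?thesis unfolding G_def m_def dn_def by auto
qed




definition ap :: "nat \<Rightarrow> nat \<Rightarrow> int \<Rightarrow> int" where
  "ap p n k = int (card {M. is_matching n M \<and> int (card (Occ p M)) = k})"

lemma a21_ap: "a21 n k = ap 1 n k" unfolding a21_def ap_def occ21_O ..
lemma a12_ap: "a12 n k = ap 0 n k" unfolding a12_def ap_def occ12_O ..

lemma finite_Mat: "finite {M. is_matching n M}"
proof (rule finite_subset[of _ "Pow ({1..2*n} \<times> {1..2*n})"])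
  show "{M. is_matching n M} \<subseteq> Pow ({1..2*n} \<times> {1..2*n})"
  proof
    fix M assume "M \<in> {M. is_matching n M}"
    then have "is_matching n M" by simp
    have "x \<in> {1..2*n} \<times> {1..2*n}" if "x \<in> M" for x
    proof -
      obtain a b where ab: "x = (a,b)" by (cases x)
      show ?thesis using matching_pts[OF \<open>is_matching n M\<close>, of a b] that ab by simp
    qed
    then show "M \<in> Pow ({1..2*n} \<times> {1..2*n})" by blast
  qed
qed simp

lemma ap0: "ap p 0 k = (if k = 0 then 1 else 0)"
proof -
  have "is_matching 0 M \<longleftrightarrow> M = {}" for M
  proof
    assume M: "is_matching 0 M"
    have "x \<notin> M" for x
    proof
      assume "x \<in> M"
      obtain a b where ab: "x = (a,b)" by (cases x)
      have "1 \<le> a \<and> a < b \<and> b \<le> 2*0" using matching_pts[OF M, of a b] \<open>x \<in> M\<close> ab by blast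
      then show False by linarith
    qed
    then show "M = {}" by blast
  next
    assume "M = {}" then show "is_matching 0 M" unfolding is_matching_def by simp
  qed
  moreover have "Occ p {} = {}" by (simp add: Occ_def)
  ultimately have "{M. is_matching 0 M \<and> int (card (Occ p M)) = k} = (if k = 0 then {{}} else {})"
    by auto
  then show ?thesis unfolding ap_def by simp
qed

lemma ap_rec:
  assumes p: "p \<le> 1"
  shows "ap p (n+1) k = (if 1 \<le> n then 1 else 0) * ap p n (k-1)
     + (2 * int n + 1 - (if 1 \<le> n then 1 else 0) - 2 * k) * ap p n k + 2 * (k+1) * ap p n (k+1)"
proof -
  define Mat where "Mat = {M. is_matching n M}"
  define S where "S = (SIGMA M:Mat. {g \<in> {0..2*n}. int (card (Occ p (ins g M))) = k})"
  define dn where "dn = (if 1 \<le> n then 1 else (0::int))"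
  define m where "m M = int (card (Occ p M))" for M
  have eq: "{N. is_matching (n+1) N \<and> int (card (Occ p N)) = k} = (\<lambda>(M,g). ins g M) ` S"
  proof (rule set_eqI, rule iffI)
    fix N assume "N \<in> {N. is_matching (n+1) N \<and> int (card (Occ p N)) = k}"
    then have N: "is_matching (n+1) N" "int (card (Occ p N)) = k" by auto
    obtain M g where Mg: "is_matching n M" "g \<le> 2*n" "N = ins g M" using ins_surj[OF N(1)] by blast
    then have "(M,g) \<in> S" unfolding S_def Mat_def using N(2) by auto
    then show "N \<in> (\<lambda>(M,g). ins g M) ` S" using Mg(3) by force
  next
    fix N assume "N \<in> (\<lambda>(M,g). ins g M) ` S"
    then obtain M g where "(M,g) \<in> S" "N = ins g M" by auto
    then show "N \<in> {N. is_matching (n+1) N \<and> int (card (Occ p N)) = k}"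
      unfolding S_def Mat_def using ins_matching by auto
  qed
  have inj: "inj_on (\<lambda>(M,g). ins g M) S"
  proof (rule inj_onI)
    fix x y assume "x \<in> S" "y \<in> S" "(\<lambda>(M,g). ins g M) x = (\<lambda>(M,g). ins g M) y"
    moreover obtain M g where x: "x = (M,g)" by (cases x)
    moreover obtain M' g' where y: "y = (M',g')" by (cases y)
    ultimately have "is_matching n M" "is_matching n M'" "ins g M = ins g' M'"
      unfolding S_def Mat_def by auto
    then show "x = y" using ins_inj x y by blast
  qed
  have finM: "finite Mat" unfolding Mat_def by (rule finite_Mat)
  have "ap p (n+1) k = int (card S)" unfolding ap_def eq card_image[OF inj] ..
  also have "card S = (\<Sum>M\<in>Mat. card {g \<in> {0..2*n}. int (card (Occ p (ins g M))) = k})"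
    unfolding S_def by (rule card_SigmaI[OF finM]) auto
  also have "int \<dots> = (\<Sum>M\<in>Mat. int (card {g \<in> {0..2*n}. int (card (Occ p (ins g M))) = k}))"
    by (rule of_nat_sum)
  also have "\<dots> = (\<Sum>M\<in>Mat. dn * (if m M = k - 1 then 1 else 0) + (2 * int n + 1 - dn - 2 * k) * (if m M = k then 1 else 0)
       + 2 * (k+1) * (if m M = k + 1 then 1 else 0))"
  proof (rule sum.cong[OF refl])
    fix M assume "M \<in> Mat"
    then have M: "is_matching n M" unfolding Mat_def by simp
    show "int (card {g \<in> {0..2*n}. int (card (Occ p (ins g M))) = k}) = dn * (if m M = k - 1 then 1 else 0) + (2 * int n + 1 - dn - 2 * k) * (if m M = k then 1 else 0)
       + 2 * (k+1) * (if m M = k + 1 then 1 else 0)"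
    proof -
      have c: "int (card {g \<in> {0..2*n}. int (card (Occ p (ins g M))) = k}) =
        (if k = m M + 1 then dn else 0) + (if k = m M then 2 * int n + 1 - dn - 2 * m M else 0)
        + (if k = m M - 1 then 2 * m M else 0)"
        using count_M[OF M p, of k] unfolding m_def dn_def by simp
      show ?thesis unfolding c by auto
    qed
  qed
  also have "\<dots> = dn * (\<Sum>M\<in>Mat. if m M = k - 1 then 1 else 0) + (2 * int n + 1 - dn - 2 * k) * (\<Sum>M\<in>Mat. if m M = k then 1 else 0)
       + 2 * (k+1) * (\<Sum>M\<in>Mat. if m M = k + 1 then 1 else 0)"
    by (simp add: sum.distrib sum_distrib_left)
  moreover have apj: "(\<Sum>M\<in>Mat. if m M = j then 1 else 0) = ap p n j" for j
    unfolding ap_def m_def Mat_def using int_card_filter[OF finM[unfolded Mat_def], of "\<lambda>M. int (card (Occ p M)) = j"]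
    by simp
  ultimately show ?thesis unfolding dn_def by (simp add: apj)
qed

theorem theorem1:
  shows "(\<forall>n k. a12 n k = a21 n k)
    \<and> (\<forall>n k. n \<ge> 1 \<longrightarrow>
         a21 (n + 1) k = a21 n (k - 1) + 2 * (int n - k) * a21 n k + 2 * (k + 1) * a21 n (k + 1))
    \<and> a21 1 0 = 1 \<and> (\<forall>k. k \<noteq> 0 \<longrightarrow> a21 1 k = 0)
    \<and> (\<forall>n k. k < 0 \<longrightarrow> a21 n k = 0)"
proof (intro conjI allI impI)
  fix n k
  show "a12 n k = a21 n k" unfolding a12_ap a21_ap
  proof (induction n arbitrary: k)
    case 0 then show ?case by (simp add: ap0)
  next
    case (Suc n)
    show ?case using ap_rec[of 0 n k] ap_rec[of 1 n k] Suc.IH by simp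
  qed
next
  fix n :: nat and k :: int assume "n \<ge> 1"
  then show "a21 (n + 1) k = a21 n (k - 1) + 2 * (int n - k) * a21 n k + 2 * (k + 1) * a21 n (k + 1)"
    unfolding a21_ap using ap_rec[of 1 n k] by (simp add: algebra_simps)
next
  show "a21 1 0 = 1" unfolding a21_ap using ap_rec[of 1 0 0] by (simp add: ap0)
next
  fix k :: int assume "k \<noteq> 0"
  then show "a21 1 k = 0" unfolding a21_ap using ap_rec[of 1 0 k] by (simp add: ap0)
next
  fix n :: nat and k :: int assume "k < 0"
  then have "{M. is_matching n M \<and> int (occ21 M) = k} = {}" by auto
  then show "a21 n k = 0" unfolding a21_def by (metis card.empty of_nat_0)
qed


end
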